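(* Let $(X_{m,t})$ be a random array in $\Omega^{M\times(T+1)}$ whose rows are independent, each row $m$ being a Markov chain with transition matrix $P_m$. Then for all $i\in\Omega$, $\varepsilon>0$ and $0<s_1\le s_2$, \[ \Pr\big(\|\hat P_{i,:}-\tilde P_{i,:}\|_1\ge\varepsilon,\ s_1\le N_i\le s_2\big) \ \le\ (1+|\Omega|)\exp\left(-\frac{3\varepsilon^2 s_1}{6\sqrt2|\Omega|s_2/s_1 + 2\sqrt2|\Omega|^{1/2}\varepsilon}\right). \]
   Context: $\Omega$ is a finite set, $M,T\ge1$ integers, rows indexed by $m=1,\dots,M$ and columns by $t=0,\dots,T$. Let $N_{m,i}=\sum_{t=1}^T1(X_{m,t-1}=i)$, $N_i=\sum_mN_{m,i}$, $N_{i,j}=\sum_{m=1}^M\sum_{t=1}^T1(X_{m,t-1}=i,X_{m,t}=j)$. The empirical transition matrix is $\hat P_{i,j}=N_{i,j}/N_i$ if $N_i>0$ and $1/|\Omega|$ otherwise. Define $\tilde P_{i,j}=\sum_m\frac{N_{m,i}}{N_i}P_m(i,j)$ if $N_i>0$ and $1/|\Omega|$ otherwise. $\|\cdot\|_1$ is the $\ell_1$ norm of a row vector. *)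

theory Defs
  imports Complex_Main "HOL-Library.FuncSet"
begin

text \<open>An array x in Omega^(M x (T+1)) is a function on {1..M} x {0..T}
  (extensional, i.e. undefined outside this index set). The state space Omega is a finite type.\<close>

definition arrays :: "nat \<Rightarrow> nat \<Rightarrow> (nat \<times> nat \<Rightarrow> 'a) set" where
  "arrays M T = PiE ({1..M} \<times> {0..T}) (\<lambda>_. UNIV)"

text \<open>Law of an array with independent rows, row m being a (time-homogeneous) Markov chain
  with initial distribution mu m and transition matrix P m:
  Pr(X = x) = prod_m mu_m(x_{m,0}) prod_{t=1..T} P_m(x_{m,t-1}, x_{m,t}).\<close>

definition array_law :: "(nat \<Rightarrow> 'a \<Rightarrow> real) \<Rightarrow> (nat \<Rightarrow> 'a \<Rightarrow> 'a \<Rightarrow> real) \<Rightarrow> nat \<Rightarrow> nat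
    \<Rightarrow> (nat \<times> nat \<Rightarrow> 'a) \<Rightarrow> real" where
  "array_law mu P M T x =
     (\<Prod>m\<in>{1..M}. mu m (x (m, 0)) * (\<Prod>t\<in>{1..T}. P m (x (m, t - 1)) (x (m, t))))"

definition array_prob :: "(nat \<Rightarrow> 'a \<Rightarrow> real) \<Rightarrow> (nat \<Rightarrow> 'a \<Rightarrow> 'a \<Rightarrow> real) \<Rightarrow> nat \<Rightarrow> nat
    \<Rightarrow> ((nat \<times> nat \<Rightarrow> 'a) \<Rightarrow> bool) \<Rightarrow> real" where
  "array_prob mu P M T E = (\<Sum>x\<in>arrays M T. if E x then array_law mu P M T x else 0)"

definition Nmi :: "nat \<Rightarrow> (nat \<times> nat \<Rightarrow> 'a) \<Rightarrow> nat \<Rightarrow> 'a \<Rightarrow> real" where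
  "Nmi T x m i = real (card {t\<in>{1..T}. x (m, t - 1) = i})"

definition Ni :: "nat \<Rightarrow> nat \<Rightarrow> (nat \<times> nat \<Rightarrow> 'a) \<Rightarrow> 'a \<Rightarrow> real" where
  "Ni M T x i = (\<Sum>m\<in>{1..M}. Nmi T x m i)"

definition Nij :: "nat \<Rightarrow> nat \<Rightarrow> (nat \<times> nat \<Rightarrow> 'a) \<Rightarrow> 'a \<Rightarrow> 'a \<Rightarrow> real" where
  "Nij M T x i j = real (card {(m, t). m \<in> {1..M} \<and> t \<in> {1..T} \<and> x (m, t - 1) = i \<and> x (m, t) = j})"

definition Phat :: "nat \<Rightarrow> nat \<Rightarrow> (nat \<times> nat \<Rightarrow> 'a::finite) \<Rightarrow> 'a \<Rightarrow> 'a \<Rightarrow> real" where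
  "Phat M T x i j = (if Ni M T x i > 0 then Nij M T x i j / Ni M T x i else 1 / real (card (UNIV::'a set)))"

definition Ptilde :: "(nat \<Rightarrow> 'a \<Rightarrow> 'a \<Rightarrow> real) \<Rightarrow> nat \<Rightarrow> nat \<Rightarrow> (nat \<times> nat \<Rightarrow> 'a::finite)
    \<Rightarrow> 'a \<Rightarrow> 'a \<Rightarrow> real" where
  "Ptilde P M T x i j = (if Ni M T x i > 0
      then (\<Sum>m\<in>{1..M}. Nmi T x m i / Ni M T x i * P m i j)
      else 1 / real (card (UNIV::'a set)))"

end

theory Submission
  imports Defs "HOL-Probability.Hoeffding"
begin


lemma row_bound:
  fixes T :: nat and mu :: "'a::finite \<Rightarrow> real" and h :: "'a \<Rightarrow> 'a \<Rightarrow> real"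
  assumes mu0: "\<And>a. mu a \<ge> 0" and h0: "\<And>a b. h a b \<ge> 0"
    and hs: "\<And>a. (\<Sum>b\<in>UNIV. h a b) \<le> 1"
  shows "(\<Sum>y\<in>PiE {0..T} (\<lambda>_. UNIV). mu (y 0) * (\<Prod>t\<in>{1..T}. h (y (t-1)) (y t))) \<le> (\<Sum>a\<in>UNIV. mu a)"
proof (induction T)
  case 0
  have "(\<Sum>y\<in>PiE {0..0::nat} (\<lambda>_. UNIV::'a set). mu (y 0) * (\<Prod>t\<in>{1..0}. h (y (t-1)) (y t)))
      = (\<Sum>y\<in>PiE {0::nat} (\<lambda>_. UNIV::'a set). mu (y 0))" by simp
  also have "\<dots> = (\<Sum>a\<in>UNIV. mu a)"
    using prod_sum_PiE[of "{0::nat}" "\<lambda>_. UNIV::'a set" "\<lambda>_ a. mu a"] by simp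
  finally show ?case by simp
next
  case (Suc T)
  define G where "G = (\<lambda>y::nat\<Rightarrow>'a. mu (y 0) * (\<Prod>t\<in>{1..T}. h (y (t-1)) (y t)))"
  have G0: "G y \<ge> 0" for y unfolding G_def using mu0 h0 by (intro mult_nonneg_nonneg prod_nonneg) auto
  have e1: "{0..Suc T} = insert (Suc T) {0..T}" by auto
  have e2: "{1..Suc T} = insert (Suc T) {1..T}" by auto
  have "(\<Sum>y\<in>PiE {0..Suc T} (\<lambda>_. UNIV). mu (y 0) * (\<Prod>t\<in>{1..Suc T}. h (y (t-1)) (y t)))
     = (\<Sum>(b,g)\<in>UNIV \<times> PiE {0..T} (\<lambda>_. UNIV). G g * h (g T) b)"
  proof (rule sum.reindex_bij_witness[of _ "\<lambda>(b,g). g(Suc T := b)" "\<lambda>g. (g (Suc T), g(Suc T := undefined))"])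
    fix y :: "nat \<Rightarrow> 'a"
    have "(\<Prod>t\<in>{1..T}. h ((y(Suc T := undefined)) (t-1)) ((y(Suc T := undefined)) t)) = (\<Prod>t\<in>{1..T}. h (y (t-1)) (y t))"
      by (intro prod.cong) auto
    then show "(\<lambda>(b,g). G g * h (g T) b) ((\<lambda>g. (g (Suc T), g(Suc T := undefined))) y) = mu (y 0) * (\<Prod>t\<in>{1..Suc T}. h (y (t-1)) (y t))"
      by (simp add: G_def e2 mult_ac)
  qed (auto simp: PiE_def extensional_def e1)
  also have "\<dots> = (\<Sum>g\<in>PiE {0..T} (\<lambda>_. UNIV). \<Sum>b\<in>UNIV. G g * h (g T) b)"
    by (subst sum.cartesian_product[symmetric]) (subst sum.swap, simp)
  also have "\<dots> \<le> (\<Sum>g\<in>PiE {0..T} (\<lambda>_. UNIV). G g)"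
  proof (rule sum_mono)
    fix g show "(\<Sum>b\<in>UNIV. G g * h (g T) b) \<le> G g"
      using mult_left_mono[OF hs[of "g T"] G0[of g]] by (simp add: sum_distrib_left)
  qed
  also have "\<dots> \<le> (\<Sum>a\<in>UNIV. mu a)" using Suc.IH by (simp add: G_def)
  finally show ?case .
qed

lemma array_bound:
  fixes M T :: nat and mu :: "nat \<Rightarrow> 'a::finite \<Rightarrow> real" and h :: "nat \<Rightarrow> 'a \<Rightarrow> 'a \<Rightarrow> real"
  assumes mu0: "\<And>m a. m \<in> {1..M} \<Longrightarrow> mu m a \<ge> 0" and mus: "\<And>m. m \<in> {1..M} \<Longrightarrow> (\<Sum>a\<in>UNIV. mu m a) = 1"
    and h0: "\<And>m a b. m \<in> {1..M} \<Longrightarrow> h m a b \<ge> 0"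
    and hs: "\<And>m a. m \<in> {1..M} \<Longrightarrow> (\<Sum>b\<in>UNIV. h m a b) \<le> 1"
  shows "(\<Sum>x\<in>arrays M T. \<Prod>m\<in>{1..M}. mu m (x (m,0)) * (\<Prod>t\<in>{1..T}. h m (x (m, t-1)) (x (m,t)))) \<le> 1"
proof -
  define f where "f = (\<lambda>m (y::nat\<Rightarrow>'a). mu m (y 0) * (\<Prod>t\<in>{1..T}. h m (y (t-1)) (y t)))"
  have "(\<Sum>x\<in>arrays M T. \<Prod>m\<in>{1..M}. mu m (x (m,0)) * (\<Prod>t\<in>{1..T}. h m (x (m, t-1)) (x (m,t))))
      = (\<Sum>g\<in>PiE {1..M} (\<lambda>_. PiE {0..T} (\<lambda>_. UNIV)). \<Prod>m\<in>{1..M}. f m (g m))"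
  proof (rule sum.reindex_bij_witness[of _ "\<lambda>g. (\<lambda>p\<in>{1..M}\<times>{0..T}. g (fst p) (snd p))"
          "\<lambda>x. (\<lambda>m\<in>{1..M}. \<lambda>t\<in>{0..T}. x (m,t))"])
    fix x :: "nat \<times> nat \<Rightarrow> 'a" assume x: "x \<in> arrays M T"
    show "(\<lambda>p\<in>{1..M}\<times>{0..T}. (\<lambda>m\<in>{1..M}. \<lambda>t\<in>{0..T}. x (m,t)) (fst p) (snd p)) = x"
      using x by (auto simp: arrays_def PiE_def extensional_def fun_eq_iff)
    show "(\<lambda>m\<in>{1..M}. \<lambda>t\<in>{0..T}. x (m,t)) \<in> PiE {1..M} (\<lambda>_. PiE {0..T} (\<lambda>_. UNIV))"
      by auto
    show "(\<Prod>m\<in>{1..M}. f m ((\<lambda>m\<in>{1..M}. \<lambda>t\<in>{0..T}. x (m,t)) m)) =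
       (\<Prod>m\<in>{1..M}. mu m (x (m,0)) * (\<Prod>t\<in>{1..T}. h m (x (m, t-1)) (x (m,t))))"
      unfolding f_def by (intro prod.cong refl) (auto intro!: prod.cong)
  next
    fix g assume g: "g \<in> PiE {1..M} (\<lambda>_. PiE {0..T} (\<lambda>_. UNIV::'a set))"
    show "(\<lambda>m\<in>{1..M}. \<lambda>t\<in>{0..T}. (\<lambda>p\<in>{1..M}\<times>{0..T}. g (fst p) (snd p)) (m,t)) = g"
      using g by (force simp: PiE_def extensional_def fun_eq_iff Pi_def)
    show "(\<lambda>p\<in>{1..M}\<times>{0..T}. g (fst p) (snd p)) \<in> arrays M T"
      by (auto simp: arrays_def)
  qed
  also have "\<dots> = (\<Prod>m\<in>{1..M}. \<Sum>y\<in>PiE {0..T} (\<lambda>_. UNIV). f m y)"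
    by (rule prod_sum_PiE[symmetric]) (auto intro!: finite_PiE)
  also have "\<dots> \<le> 1"
  proof (rule prod_le_1)
    fix m assume m: "m \<in> {1..M}"
    show "0 \<le> (\<Sum>y\<in>PiE {0..T} (\<lambda>_. UNIV). f m y) \<and> (\<Sum>y\<in>PiE {0..T} (\<lambda>_. UNIV). f m y) \<le> 1"
    proof
      show "0 \<le> (\<Sum>y\<in>PiE {0..T} (\<lambda>_. UNIV). f m y)" unfolding f_def
        using m mu0 h0 by (intro sum_nonneg mult_nonneg_nonneg prod_nonneg) auto
      show "(\<Sum>y\<in>PiE {0..T} (\<lambda>_. UNIV). f m y) \<le> 1"
        unfolding f_def using row_bound[of "mu m" "h m" T] m mu0 h0 hs mus by auto
    qed
  qed
  finally show ?thesis .
qed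

lemma final_arith:
  fixes d e s1 s2 pr :: real
  assumes d: "d \<ge> 1" and e: "e > 0" and s: "0 < s1" "s1 \<le> s2"
    and p1: "pr \<le> 1" and p2: "pr \<le> 2 powr d * exp (- (e^2 * s1 / 2))"
  shows "pr \<le> (1 + d) * exp (- (3 * e^2 * s1) / (6 * sqrt 2 * d * s2 / s1 + 2 * sqrt 2 * sqrt d * e))"
proof -
  define x where "x = e^2 * s1"
  have x0: "x > 0" unfolding x_def using e s by simp
  define D where "D = 6 * sqrt 2 * d * s2 / s1 + 2 * sqrt 2 * sqrt d * e"
  have r: "s2 / s1 \<ge> 1" using s by simp
  have "6 * sqrt 2 * d * s2 / s1 = (6 * sqrt 2 * d) * (s2 / s1)" by simp
  also have "\<dots> \<ge> (6 * sqrt 2 * d) * 1" using r d by (intro mult_left_mono) auto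
  finally have "6 * sqrt 2 * d * s2 / s1 \<ge> 6 * sqrt 2 * d" by simp
  moreover have "2 * sqrt 2 * sqrt d * e \<ge> 0" using d e by simp
  ultimately have D: "D \<ge> 6 * sqrt 2 * d" unfolding D_def by linarith
  have dpos: "6 * sqrt 2 * d > 0" using d by simp
  define y where "y = x / (2 * sqrt 2 * d)"
  have D0: "D > 0" using D dpos by linarith
  have "3 * x / D \<le> 3 * x / (6 * sqrt 2 * d)"
    using D dpos x0 d D0 by (intro divide_left_mono mult_pos_pos) auto
  also have "\<dots> = y" unfolding y_def by simp
  finally have Ey: "3 * x / D \<le> y" .
  have "(1 + d) * exp (- y) \<le> (1 + d) * exp (- (3 * x) / D)"
    using Ey d by (intro mult_left_mono) auto
  hence R: "(1 + d) * exp (- y) \<le> (1 + d) * exp (- (3 * e^2 * s1) / D)" unfolding x_def by (simp add: mult.assoc)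
  have l2: "ln 2 \<le> ln (1 + d)" using d by simp
  have ln0: "ln (2::real) > 0" by simp
  show ?thesis
  proof (cases "y \<le> ln (1 + d)")
    case True
    have "1 = (1 + d) * exp (- ln (1 + d))" using d by (simp add: exp_minus field_simps)
    also have "\<dots> \<le> (1 + d) * exp (- y)" using True d by (intro mult_left_mono) auto
    finally show ?thesis using R p1 unfolding D_def by linarith
  next
    case False
    have xy: "x / 2 = sqrt 2 * d * y" unfolding y_def using d by (simp add: field_simps)
    have k: "sqrt 2 * d - 1 > 0"
    proof -
      have "sqrt 2 > 1" by simp
      moreover have "sqrt 2 * d \<ge> sqrt 2 * 1" using d by (intro mult_left_mono) auto
      ultimately have "sqrt 2 * d > 1" by linarith
      thus ?thesis by simp
    qed
    have "y * (sqrt 2 * d - 1) \<ge> ln (1 + d) * (sqrt 2 * d - 1)"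
      using False k by (intro mult_right_mono) auto
    moreover have "sqrt 2 * d * ln (1 + d) \<ge> d * ln 2"
    proof -
      have "sqrt 2 * ln (1+d) \<ge> 1 * ln 2" using l2 ln0 by (intro mult_mono) auto
      thus ?thesis using d by (simp add: mult_ac mult_left_mono[of "1 * ln 2" "sqrt 2 * ln (1+d)" d])
    qed
    ultimately have key: "d * ln 2 - x / 2 \<le> ln (1 + d) - y"
      unfolding xy by (simp add: algebra_simps)
    have "2 powr d * exp (- (e^2 * s1 / 2)) = exp (d * ln 2 - x / 2)"
      unfolding x_def by (simp only: diff_conv_add_uminus exp_add powr_def) (simp add: mult.commute)
    also have "\<dots> \<le> exp (ln (1 + d) - y)" using key by simp
    also have "\<dots> = (1 + d) * exp (- y)" using d by (simp add: exp_diff exp_minus field_simps)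
    finally show ?thesis using R p2 unfolding D_def by linarith
  qed
qed

lemma two_point:
  fixes q l :: real
  assumes q: "0 \<le> q" and l: "l \<ge> 0"
  shows "exp (-l) * (1 + q * (exp (2*l) - 1)) \<le> exp (l * (2*q - 1) + l^2/2)"
proof -
  have A: "-(2*l) * q + ln (1 + q * (exp (2*l) - 1)) \<le> (2*l)^2/8"
    using Hoeffdings_lemma_aux[of "2*l" q] q l by simp
  have pos: "1 + q * (exp (2*l) - 1) > 0"
  proof -
    have "exp (2*l) \<ge> 1" using l by simp
    thus ?thesis using q by (simp add: add_pos_nonneg)
  qed
  have B: "1 + q * (exp (2*l) - 1) \<le> exp (2*l*q + l^2/2)"
  proof -
    have "ln (1 + q * (exp (2*l) - 1)) \<le> 2*l*q + l^2/2" using A by (simp add: power2_eq_square)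
    thus ?thesis using pos by (metis exp_le_cancel_iff exp_ln)
  qed
  have "exp (-l) * (1 + q * (exp (2*l) - 1)) \<le> exp (-l) * exp (2*l*q + l^2/2)" using B by simp
  also have "\<dots> = exp (l * (2*q - 1) + l^2/2)" by (simp add: algebra_simps flip: exp_add)
  finally show ?thesis .
qed

lemma card_ind: "finite A \<Longrightarrow> real (card {t\<in>A. Q t}) = (\<Sum>t\<in>A. if Q t then 1 else (0::real))"
  using sum.inter_filter[of A "\<lambda>_. 1::real" Q] by simp

theorem proposition6p4:
  fixes mu :: "nat \<Rightarrow> 'a::finite \<Rightarrow> real"
    and P :: "nat \<Rightarrow> 'a \<Rightarrow> 'a \<Rightarrow> real"
    and M T :: nat
    and i :: 'a
    and \<epsilon> s1 s2 :: real
  assumes "M \<ge> 1" and "T \<ge> 1"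
    and mu_nonneg: "\<And>m a. m \<in> {1..M} \<Longrightarrow> mu m a \<ge> 0"
    and mu_sum: "\<And>m. m \<in> {1..M} \<Longrightarrow> (\<Sum>a\<in>UNIV. mu m a) = 1"
    and P_nonneg: "\<And>m a b. m \<in> {1..M} \<Longrightarrow> P m a b \<ge> 0"
    and P_sum: "\<And>m a. m \<in> {1..M} \<Longrightarrow> (\<Sum>b\<in>UNIV. P m a b) = 1"
    and "\<epsilon> > 0" and "0 < s1" and "s1 \<le> s2"
  shows "array_prob mu P M T
           (\<lambda>x. (\<Sum>j\<in>UNIV. \<bar>Phat M T x i j - Ptilde P M T x i j\<bar>) \<ge> \<epsilon>
                 \<and> s1 \<le> Ni M T x i \<and> Ni M T x i \<le> s2)
         \<le> (1 + real (card (UNIV::'a set))) *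
           exp (- (3 * \<epsilon>^2 * s1) /
                (6 * sqrt 2 * real (card (UNIV::'a set)) * s2 / s1 + 2 * sqrt 2 * sqrt (real (card (UNIV::'a set))) * \<epsilon>))"
proof -
  note eps = \<open>\<epsilon> > 0\<close> and s1pos = \<open>0 < s1\<close> and s12 = \<open>s1 \<le> s2\<close>
  define law where "law = array_law mu P M T"
  have law0: "law x \<ge> 0" for x
    unfolding law_def array_law_def using mu_nonneg P_nonneg
    by (intro prod_nonneg mult_nonneg_nonneg) auto
  define I where "I = (\<lambda>(x::nat \<times> nat \<Rightarrow> 'a) m t. if x (m, t-1) = i then 1 else (0::real))"
  have Nmi_sum: "Nmi T x m i = (\<Sum>t\<in>{1..T}. I x m t)" for x m
    unfolding Nmi_def I_def by (rule card_ind) simp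
  have Ni_sum: "Ni M T x i = (\<Sum>m\<in>{1..M}. \<Sum>t\<in>{1..T}. I x m t)" for x
    unfolding Ni_def using Nmi_sum by simp
  have Nij_sum: "Nij M T x i j = (\<Sum>m\<in>{1..M}. \<Sum>t\<in>{1..T}. I x m t * (if x (m,t) = j then 1 else 0))" for x j
  proof -
    have "{(m, t). m \<in> {1..M} \<and> t \<in> {1..T} \<and> x (m, t-1) = i \<and> x (m,t) = j}
        = {p \<in> {1..M}\<times>{1..T}. x (fst p, snd p - 1) = i \<and> x p = j}" by auto
    hence "Nij M T x i j = (\<Sum>p\<in>{1..M}\<times>{1..T}. if x (fst p, snd p - 1) = i \<and> x p = j then 1 else 0)"
      unfolding Nij_def by (simp only: card_ind[OF finite_cartesian_product[OF finite_atLeastAtMost finite_atLeastAtMost]])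
    also have "\<dots> = (\<Sum>m\<in>{1..M}. \<Sum>t\<in>{1..T}. if x (m, t - 1) = i \<and> x (m,t) = j then 1 else 0)"
      by (simp add: sum.cartesian_product split_def)
    finally show ?thesis unfolding I_def by (auto intro!: sum.cong)
  qed
  define ind where "ind = (\<lambda>(S::'a set) b. if b \<in> S then 1 else (0::real))"
  define sg where "sg = (\<lambda>S b. 2 * ind S b - 1)"
  define c where "c = (\<lambda>S m. \<Sum>b\<in>UNIV. sg S b * P m i b)"
  define phi where "phi = (\<lambda>S m a b. if a = i then exp (\<epsilon> * (sg S b - c S m) - \<epsilon>^2/2) else 1)"
  define Z where "Z = (\<lambda>S x. \<Sum>j\<in>UNIV. sg S j * (Nij M T x i j - (\<Sum>m\<in>{1..M}. Nmi T x m i * P m i j)))"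
  have ident: "(\<Prod>m\<in>{1..M}. \<Prod>t\<in>{1..T}. phi S m (x (m,t-1)) (x (m,t))) = exp (\<epsilon> * Z S x - \<epsilon>^2/2 * Ni M T x i)" for S x
  proof -
    have "(\<Prod>m\<in>{1..M}. \<Prod>t\<in>{1..T}. phi S m (x (m,t-1)) (x (m,t)))
        = (\<Prod>m\<in>{1..M}. \<Prod>t\<in>{1..T}. exp (I x m t * (\<epsilon> * (sg S (x (m,t)) - c S m) - \<epsilon>^2/2)))"
      unfolding phi_def I_def by (intro prod.cong refl) auto
    also have "\<dots> = exp (\<Sum>m\<in>{1..M}. \<Sum>t\<in>{1..T}. I x m t * (\<epsilon> * (sg S (x (m,t)) - c S m) - \<epsilon>^2/2))"
      by (simp add: exp_sum)
    also have "(\<Sum>m\<in>{1..M}. \<Sum>t\<in>{1..T}. I x m t * (\<epsilon> * (sg S (x (m,t)) - c S m) - \<epsilon>^2/2))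
        = \<epsilon> * (\<Sum>m\<in>{1..M}. \<Sum>t\<in>{1..T}. I x m t * sg S (x (m,t)))
          - \<epsilon> * (\<Sum>m\<in>{1..M}. Nmi T x m i * c S m) - \<epsilon>^2/2 * Ni M T x i"
      unfolding Ni_sum Nmi_sum
      by (simp add: algebra_simps sum_distrib_left sum_distrib_right sum_subtractf sum.distrib sum_divide_distrib)
    also have "(\<Sum>m\<in>{1..M}. \<Sum>t\<in>{1..T}. I x m t * sg S (x (m,t))) = (\<Sum>j\<in>UNIV. sg S j * Nij M T x i j)"
    proof -
      have "(\<Sum>j\<in>UNIV. sg S j * Nij M T x i j)
          = (\<Sum>j\<in>UNIV. \<Sum>m\<in>{1..M}. \<Sum>t\<in>{1..T}. I x m t * (if x (m,t) = j then sg S j else 0))"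
        unfolding Nij_sum sum_distrib_left by (intro sum.cong refl) auto
      also have "\<dots> = (\<Sum>m\<in>{1..M}. \<Sum>j\<in>UNIV. \<Sum>t\<in>{1..T}. I x m t * (if x (m,t) = j then sg S j else 0))"
        by (rule sum.swap)
      also have "\<dots> = (\<Sum>m\<in>{1..M}. \<Sum>t\<in>{1..T}. \<Sum>j\<in>UNIV. I x m t * (if x (m,t) = j then sg S j else 0))"
        by (intro sum.cong refl sum.swap)
      also have "\<dots> = (\<Sum>m\<in>{1..M}. \<Sum>t\<in>{1..T}. I x m t * sg S (x (m,t)))"
        by (simp add: sum_distrib_left[symmetric])
      finally show ?thesis by simp
    qed
    also have "(\<Sum>m\<in>{1..M}. Nmi T x m i * c S m) = (\<Sum>j\<in>UNIV. sg S j * (\<Sum>m\<in>{1..M}. Nmi T x m i * P m i j))"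
      unfolding c_def by (simp add: sum_distrib_left sum.swap[of _ UNIV] mult_ac)
    finally show ?thesis unfolding Z_def by (simp add: algebra_simps sum_subtractf)
  qed
  have hoeff: "(\<Sum>b\<in>UNIV. P m a b * phi S m a b) \<le> 1" if m: "m \<in> {1..M}" for S m a
  proof (cases "a = i")
    case False
    thus ?thesis unfolding phi_def using P_sum[OF m] by simp
  next
    case True
    define q where "q = (\<Sum>b\<in>UNIV. P m i b * ind S b)"
    have q0: "q \<ge> 0" unfolding q_def ind_def using P_nonneg[OF m] by (intro sum_nonneg) auto
    have cq: "c S m = 2 * q - 1"
      unfolding c_def q_def sg_def using P_sum[OF m]
      by (simp add: algebra_simps sum_subtractf sum_distrib_left)
    have ex: "exp (\<epsilon> * sg S b) = exp (-\<epsilon>) * (1 + ind S b * (exp (2*\<epsilon>) - 1))" for b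
      unfolding sg_def ind_def by (simp add: algebra_simps flip: exp_add)
    have "(\<Sum>b\<in>UNIV. P m a b * phi S m a b)
        = (\<Sum>b\<in>UNIV. P m i b * exp (\<epsilon> * sg S b)) * exp (- (\<epsilon> * c S m) - \<epsilon>^2/2)"
      unfolding phi_def True by (simp add: sum_distrib_right algebra_simps flip: exp_add)
    also have "(\<Sum>b\<in>UNIV. P m i b * exp (\<epsilon> * sg S b)) = exp (-\<epsilon>) * (1 + q * (exp (2*\<epsilon>) - 1))"
    proof -
      have "(\<Sum>b\<in>UNIV. P m i b * exp (\<epsilon> * sg S b))
          = (\<Sum>b\<in>UNIV. exp (-\<epsilon>) * P m i b + (exp (-\<epsilon>) * (exp (2*\<epsilon>) - 1)) * (P m i b * ind S b))"
        by (intro sum.cong refl) (simp add: ex algebra_simps)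
      also have "\<dots> = exp (-\<epsilon>) * (\<Sum>b\<in>UNIV. P m i b) + (exp (-\<epsilon>) * (exp (2*\<epsilon>) - 1)) * q"
        unfolding q_def by (simp add: sum.distrib sum_distrib_left)
      finally show ?thesis using P_sum[OF m] by (simp add: algebra_simps)
    qed
    also have "exp (-\<epsilon>) * (1 + q * (exp (2*\<epsilon>) - 1)) * exp (- (\<epsilon> * c S m) - \<epsilon>^2/2)
        \<le> exp (\<epsilon> * (2*q - 1) + \<epsilon>^2/2) * exp (- (\<epsilon> * c S m) - \<epsilon>^2/2)"
      using two_point[OF q0, of \<epsilon>] eps by (intro mult_right_mono) auto
    also have "\<dots> = 1" unfolding cq by (simp flip: exp_add)
    finally show ?thesis .
  qed
  have phi0: "phi S m a b \<ge> 0" for S m a b unfolding phi_def by simp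
  have expect: "(\<Sum>x\<in>arrays M T. law x * exp (\<epsilon> * Z S x - \<epsilon>^2/2 * Ni M T x i)) \<le> 1" for S
  proof -
    have "(\<Sum>x\<in>arrays M T. law x * exp (\<epsilon> * Z S x - \<epsilon>^2/2 * Ni M T x i))
       = (\<Sum>x\<in>arrays M T. \<Prod>m\<in>{1..M}. mu m (x (m,0)) * (\<Prod>t\<in>{1..T}. (\<lambda>m a b. P m a b * phi S m a b) m (x (m, t-1)) (x (m,t))))"
    proof (rule sum.cong[OF refl])
      fix x
      show "law x * exp (\<epsilon> * Z S x - \<epsilon>^2/2 * Ni M T x i) = (\<Prod>m\<in>{1..M}. mu m (x (m,0)) * (\<Prod>t\<in>{1..T}. (\<lambda>m a b. P m a b * phi S m a b) m (x (m, t-1)) (x (m,t))))"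
        unfolding ident[symmetric] law_def array_law_def by (simp add: prod.distrib mult_ac)
    qed
    also have "\<dots> \<le> 1"
      by (rule array_bound) (use mu_nonneg mu_sum P_nonneg hoeff phi0 in auto)
    finally show ?thesis .
  qed
  have total: "(\<Sum>x\<in>arrays M T. law x) \<le> 1"
    unfolding law_def array_law_def
    by (rule array_bound) (use mu_nonneg mu_sum P_nonneg P_sum in auto)
  define Ev where "Ev = (\<lambda>x. (\<Sum>j\<in>UNIV. \<bar>Phat M T x i j - Ptilde P M T x i j\<bar>) \<ge> \<epsilon>
                 \<and> s1 \<le> Ni M T x i \<and> Ni M T x i \<le> s2)"
  have evbound: "\<exists>S. \<epsilon> * Z S x - \<epsilon>^2/2 * Ni M T x i \<ge> \<epsilon>^2 * s1 / 2" if Ex: "Ev x" for x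
  proof -
    define N where "N = Ni M T x i"
    have N1: "s1 \<le> N" and Ne: "(\<Sum>j\<in>UNIV. \<bar>Phat M T x i j - Ptilde P M T x i j\<bar>) \<ge> \<epsilon>"
      using Ex unfolding Ev_def N_def by auto
    have N0: "N > 0" using N1 s1pos by linarith
    define S where "S = {j. Phat M T x i j - Ptilde P M T x i j \<ge> 0}"
    have diff: "Phat M T x i j - Ptilde P M T x i j = (Nij M T x i j - (\<Sum>m\<in>{1..M}. Nmi T x m i * P m i j)) / N" for j
      using N0 unfolding Phat_def Ptilde_def N_def[symmetric]
      by (simp add: diff_divide_distrib sum_divide_distrib)
    have abs: "\<bar>Phat M T x i j - Ptilde P M T x i j\<bar> = sg S j * (Phat M T x i j - Ptilde P M T x i j)" for j
      unfolding sg_def ind_def S_def by auto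
    have "(\<Sum>j\<in>UNIV. \<bar>Phat M T x i j - Ptilde P M T x i j\<bar>) = Z S x / N"
      by (simp only: abs) (simp add: diff Z_def sum_divide_distrib)
    with Ne have "\<epsilon> \<le> Z S x / N" by simp
    hence ZN: "\<epsilon> * N \<le> Z S x" using N0 by (simp add: pos_le_divide_eq)
    have "\<epsilon> * (\<epsilon> * N) \<le> \<epsilon> * Z S x" using ZN eps by (intro mult_left_mono) auto
    moreover have "\<epsilon>^2 * s1 \<le> \<epsilon>^2 * N" using N1 by (intro mult_left_mono) auto
    ultimately have "\<epsilon> * Z S x - \<epsilon>^2/2 * N \<ge> \<epsilon>^2 * s1 / 2" by (simp add: power2_eq_square algebra_simps)
    thus ?thesis unfolding N_def by blast
  qed
  have pointwise: "(if Ev x then law x else 0) \<le> law x * ((\<Sum>S\<in>Pow UNIV. exp (\<epsilon> * Z S x - \<epsilon>^2/2 * Ni M T x i)) * exp (- (\<epsilon>^2 * s1 / 2)))" for x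
  proof (cases "Ev x")
    case True
    then obtain S where S: "\<epsilon> * Z S x - \<epsilon>^2/2 * Ni M T x i \<ge> \<epsilon>^2 * s1 / 2" using evbound by blast
    have "1 = exp (\<epsilon>^2 * s1 / 2) * exp (- (\<epsilon>^2 * s1 / 2))" by (simp flip: exp_add)
    also have "\<dots> \<le> exp (\<epsilon> * Z S x - \<epsilon>^2/2 * Ni M T x i) * exp (- (\<epsilon>^2 * s1 / 2))"
      using S by (intro mult_right_mono) auto
    also have "\<dots> \<le> (\<Sum>S\<in>Pow UNIV. exp (\<epsilon> * Z S x - \<epsilon>^2/2 * Ni M T x i)) * exp (- (\<epsilon>^2 * s1 / 2))"
      by (intro mult_right_mono member_le_sum) auto
    finally have "1 \<le> (\<Sum>S\<in>Pow UNIV. exp (\<epsilon> * Z S x - \<epsilon>^2/2 * Ni M T x i)) * exp (- (\<epsilon>^2 * s1 / 2))" .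
    thus ?thesis using True law0[of x] by (simp add: mult_le_cancel_left1)
  next
    case False
    thus ?thesis using law0[of x] by (simp add: sum_nonneg)
  qed
  have pr_eq: "array_prob mu P M T Ev = (\<Sum>x\<in>arrays M T. if Ev x then law x else 0)"
    unfolding array_prob_def law_def ..
  have p1: "array_prob mu P M T Ev \<le> 1"
  proof -
    have "(\<Sum>x\<in>arrays M T. if Ev x then law x else 0) \<le> (\<Sum>x\<in>arrays M T. law x)"
      using law0 by (intro sum_mono) auto
    thus ?thesis using total pr_eq by linarith
  qed
  have p2: "array_prob mu P M T Ev \<le> 2 powr real (card (UNIV::'a set)) * exp (- (\<epsilon>^2 * s1 / 2))"
  proof -
    have "(\<Sum>x\<in>arrays M T. if Ev x then law x else 0)
        \<le> (\<Sum>x\<in>arrays M T. law x * ((\<Sum>S\<in>Pow UNIV. exp (\<epsilon> * Z S x - \<epsilon>^2/2 * Ni M T x i)) * exp (- (\<epsilon>^2 * s1 / 2))))"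
      by (intro sum_mono pointwise)
    also have "\<dots> = (\<Sum>S\<in>Pow UNIV. \<Sum>x\<in>arrays M T. law x * exp (\<epsilon> * Z S x - \<epsilon>^2/2 * Ni M T x i)) * exp (- (\<epsilon>^2 * s1 / 2))"
      by (simp add: sum_distrib_left sum_distrib_right mult_ac, rule sum.swap)
    also have "\<dots> \<le> (\<Sum>S\<in>Pow (UNIV::'a set). 1) * exp (- (\<epsilon>^2 * s1 / 2))"
      by (intro mult_right_mono sum_mono expect) auto
    also have "(\<Sum>S\<in>Pow (UNIV::'a set). 1) = (2::real) ^ card (UNIV::'a set)"
      using card_Pow[of "UNIV::'a set"] by (simp del: Pow_UNIV)
    also have "\<dots> = 2 powr real (card (UNIV::'a set))" by (simp add: powr_realpow)
    finally show ?thesis using pr_eq by simp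
  qed
  have d1: "real (card (UNIV::'a set)) \<ge> 1"
    using finite_UNIV_card_ge_0[where 'a='a] by simp
  show ?thesis
    using final_arith[OF d1 eps s1pos s12 p1 p2] unfolding Ev_def by simp
qed

end
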